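(* Let $A\in\mathbb{C}$, let $\sqrt{A}$ denote either square root of $A$, and let $|q|<1$. Define $F(A;q):=\sum_{n\geq0}\frac{q^{n^2}(A;q^2)_n}{(q^2;q^2)_n}$. Then $$F(A;q)=\frac12 (-q;q^2)_{\infty}\left[(-\sqrt{A};-q)_{\infty}+(\sqrt{A};-q)_{\infty}\right].$$
   Context: The $q$-Pochhammer symbol: $(a;q)_0=1$, $(a;q)_n=\prod_{j=0}^{n-1}(1-aq^j)$ for $n\ge1$, and $(a;q)_\infty=\prod_{j\ge0}(1-aq^j)$. *)

theory Defs
  imports "HOL-Analysis.Analysis"
begin

definition qpoch :: "complex \<Rightarrow> complex \<Rightarrow> nat \<Rightarrow> complex" where
  "qpoch a q n = (\<Prod>j<n. 1 - a * q ^ j)"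

definition qpoch_inf :: "complex \<Rightarrow> complex \<Rightarrow> complex" where
  "qpoch_inf a q = (\<Prod>j. 1 - a * q ^ j)"

definition F :: "complex \<Rightarrow> complex \<Rightarrow> complex" where
  "F A q = (\<Sum>n. q ^ (n^2) * qpoch A (q^2) n / qpoch (q^2) (q^2) n)"

end

theory Submission
  imports Defs
begin


fun ec :: "complex \<Rightarrow> nat \<Rightarrow> complex" where
  "ec p 0 = 1"
| "ec p (Suc k) = - ec p k * p ^ k / (1 - p ^ Suc k)"

lemma norm_pow_le: "norm (p::complex) < 1 \<Longrightarrow> norm (p ^ Suc k) \<le> norm p"
proof -
  assume a: "norm p < 1"
  have "norm (p ^ Suc k) = norm p * norm p ^ k" by (simp add: norm_mult norm_power)
  also have "\<dots> \<le> norm p * 1" using a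
    by (intro mult_left_mono power_le_one) auto
  finally show ?thesis by simp
qed

lemma pow_ne1: "norm (p::complex) < 1 \<Longrightarrow> 1 - p ^ Suc k \<noteq> 0"
  using norm_pow_le[of p k] by auto

lemma norm_1m: "norm (p::complex) < 1 \<Longrightarrow> norm (1 - p ^ Suc k) \<ge> 1 - norm p"
proof -
  assume a: "norm p < 1"
  have "norm (1::complex) - norm (p ^ Suc k) \<le> norm (1 - p ^ Suc k)"
    by (rule norm_triangle_ineq2)
  then show ?thesis using norm_pow_le[OF a, of k] by simp
qed

lemma ec_summable:
  assumes p: "norm p < 1"
  shows "summable (\<lambda>k. norm (ec p k * x ^ k))"
proof -
  define r where "r = norm p"
  have r0: "0 \<le> r" "r < 1" using p by (auto simp: r_def)
  have "(\<lambda>n. r ^ n) \<longlonglongrightarrow> 0" using r0 by (simp add: LIMSEQ_power_zero)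
  then have "eventually (\<lambda>n. r ^ n < (1 - r) / (2 * (norm x + 1))) sequentially"
    using r0 by (intro order_tendstoD) (auto intro!: divide_pos_pos add_nonneg_pos)
  then obtain N where N: "\<And>n. n \<ge> N \<Longrightarrow> r ^ n < (1 - r) / (2 * (norm x + 1))"
    by (auto simp: eventually_sequentially)
  show ?thesis
  proof (rule summable_ratio_test[of "1/2" N])
    fix n assume n: "n \<ge> N"
    have d: "norm (1 - p ^ Suc n) \<ge> 1 - r" using norm_1m[OF p] r_def by simp
    have dpos: "norm (1 - p ^ Suc n) > 0" using d r0 by linarith
    have "norm (norm (ec p (Suc n) * x ^ Suc n)) =
          norm (ec p n * x ^ n) * (r ^ n * norm x / norm (1 - p ^ Suc n))"
      by (simp add: norm_mult norm_divide norm_power r_def field_simps)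
    also have "\<dots> \<le> norm (ec p n * x ^ n) * (1/2)"
    proof (rule mult_left_mono)
      have "r ^ n * norm x / norm (1 - p ^ Suc n) \<le> r ^ n * norm x / (1 - r)"
        using d r0 dpos by (intro divide_left_mono mult_nonneg_nonneg mult_pos_pos) auto
      also have "\<dots> \<le> r ^ n * (norm x + 1) / (1 - r)"
        using r0 by (intro divide_right_mono mult_left_mono) auto
      also have "\<dots> \<le> ((1 - r) / (2 * (norm x + 1))) * (norm x + 1) / (1 - r)"
        using N[OF n] r0 by (intro divide_right_mono mult_right_mono) auto
      also have "\<dots> = 1/2"
      proof -
        have "norm x + 1 \<noteq> 0" "1 - r \<noteq> 0" using r0 by (smt (verit) norm_ge_zero)+
        then show ?thesis by simp
      qed
      finally show "r ^ n * norm x / norm (1 - p ^ Suc n) \<le> 1/2" .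
    qed simp
    finally show "norm (norm (ec p (Suc n) * x ^ Suc n)) \<le> 1/2 * norm (norm (ec p n * x ^ n))"
      by simp
  qed simp
qed

lemma ec_rec: "norm p < 1 \<Longrightarrow> ec p (Suc k) * (1 - p ^ Suc k) = - ec p k * p ^ k"
  using pow_ne1[of p k] by simp

definition g :: "complex \<Rightarrow> complex \<Rightarrow> complex" where
  "g p x = (\<Sum>k. ec p k * x ^ k)"

lemma ec_summable': "norm p < 1 \<Longrightarrow> summable (\<lambda>k. ec p k * x ^ k)"
  by (rule summable_norm_cancel[OF ec_summable])

lemma g_feq:
  assumes p: "norm p < 1"
  shows "g p x = (1 - x) * g p (p * x)"
proof -
  define a where "a k = ec p k * x ^ k - ec p k * (p * x) ^ k" for k
  have s1: "a sums (g p x - g p (p * x))"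
    unfolding a_def g_def
    by (intro sums_diff summable_sums ec_summable'[OF p])
  have "(\<lambda>k. -x * (ec p k * (p * x) ^ k)) sums (-x * g p (p * x))"
    unfolding g_def by (intro sums_mult summable_sums ec_summable'[OF p])
  moreover have "a (Suc k) = -x * (ec p k * (p * x) ^ k)" for k
  proof -
    have "a (Suc k) = ec p (Suc k) * (1 - p ^ Suc k) * x ^ Suc k"
      unfolding a_def power_mult_distrib by (simp del: ec.simps add: right_diff_distrib left_diff_distrib mult.assoc)
    also have "\<dots> = - ec p k * p ^ k * x ^ Suc k"
      by (simp only: ec_rec[OF p])
    also have "\<dots> = -x * (ec p k * (p * x) ^ k)"
      by (simp add: power_mult_distrib mult_ac)
    finally show ?thesis .
  qed
  ultimately have "(\<lambda>k. a (Suc k)) sums (-x * g p (p * x))" by simp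
  then have "a sums (-x * g p (p * x) + a 0)" by (simp add: sums_Suc_iff)
  then have "a sums (-x * g p (p * x))" by (simp add: a_def)
  with s1 have "g p x - g p (p * x) = -x * g p (p * x)" using sums_unique2 by blast
  then show ?thesis by (simp add: algebra_simps)
qed

lemma qpoch_Suc: "qpoch x p (Suc n) = qpoch x p n * (1 - x * p ^ n)"
  by (simp add: qpoch_def)

lemma g_iter:
  assumes p: "norm p < 1"
  shows "g p x = qpoch x p n * g p (p ^ n * x)"
proof (induction n)
  case 0 then show ?case by (simp add: qpoch_def)
next
  case (Suc n)
  have "g p (p ^ n * x) = (1 - p ^ n * x) * g p (p * (p ^ n * x))"
    by (rule g_feq[OF p])
  have "g p x = qpoch x p n * ((1 - x * p ^ n) * g p (p ^ Suc n * x))"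
    using Suc.IH \<open>g p (p ^ n * x) = _\<close> by (simp add: ac_simps)
  then show ?case by (simp add: qpoch_Suc ac_simps)
qed

lemma qpoch_conv:
  fixes x p :: complex
  assumes p: "norm p < 1"
  shows "convergent_prod (\<lambda>j. 1 - x * p ^ j)"
proof -
  have "summable (\<lambda>j. norm x * norm p ^ j)"
    using p by (intro summable_mult summable_geometric) auto
  then have "summable (\<lambda>j. norm (x * p ^ j))"
    by (simp only: norm_mult norm_power)
  then have "summable (\<lambda>j. norm (1 - x * p ^ j - 1))"
    by simp
  then have "abs_convergent_prod (\<lambda>j. 1 - x * p ^ j)"
    by (rule summable_imp_abs_convergent_prod)
  then show ?thesis by (rule abs_convergent_prod_imp_convergent_prod)
qed

lemma qpoch_lim:
  assumes p: "norm p < 1"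
  shows "(\<lambda>n. qpoch x p n) \<longlonglongrightarrow> qpoch_inf x p"
proof -
  have "(\<lambda>n. \<Prod>i\<le>n. 1 - x * p ^ i) \<longlonglongrightarrow> qpoch_inf x p"
    unfolding qpoch_inf_def by (rule convergent_prod_LIMSEQ[OF qpoch_conv[OF p]])
  then have "(\<lambda>n. qpoch x p (Suc n)) \<longlonglongrightarrow> qpoch_inf x p"
    by (simp add: qpoch_def lessThan_Suc_atMost)
  then show ?thesis by (rule LIMSEQ_imp_Suc)
qed

lemma g_eq:
  assumes p: "norm p < 1"
  shows "g p x = qpoch_inf x p"
proof -
  have c: "isCont (g p) 0"
    unfolding g_def[abs_def]
    by (rule isCont_powser_converges_everywhere) (rule ec_summable'[OF p])
  have "(\<lambda>n. p ^ n * x) \<longlonglongrightarrow> 0 * x"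
    using p by (intro tendsto_mult LIMSEQ_power_zero) auto
  then have "(\<lambda>n. g p (p ^ n * x)) \<longlonglongrightarrow> g p 0"
    using c isCont_tendsto_compose by fastforce
  moreover have "g p 0 = 1" by (simp add: g_def)
  ultimately have "(\<lambda>n. qpoch x p n * g p (p ^ n * x)) \<longlonglongrightarrow> qpoch_inf x p * 1"
    using qpoch_lim[OF p] by (metis tendsto_mult)
  then have "(\<lambda>n. g p x) \<longlonglongrightarrow> qpoch_inf x p"
    using g_iter[OF p] by simp
  then show ?thesis using LIMSEQ_const_iff by blast
qed



lemma qpoch_pp_ne0: "norm p < 1 \<Longrightarrow> qpoch p p m \<noteq> 0"
  unfolding qpoch_def using pow_ne1[of p] by (simp add: prod_zero_iff)

lemma qpoch_pp_Suc: "qpoch p p (Suc m) = qpoch p p m * (1 - p ^ Suc m)"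
  by (simp add: qpoch_Suc)

lemma qpoch_shift: "qpoch A p (Suc n) = (1 - A) * qpoch (A * p) p n"
  unfolding qpoch_def by (subst prod.lessThan_Suc_shift) (simp add: mult_ac)

lemma qbin:
  assumes p: "norm p < 1"
  shows "qpoch A p n / qpoch p p n = (\<Sum>k\<le>n. ec p k * A ^ k / qpoch p p (n - k))"
proof (induction n arbitrary: A)
  case 0 then show ?case by (simp add: qpoch_def)
next
  case (Suc n)
  define Q where "Q m = qpoch p p m" for m
  have Qne: "Q m \<noteq> 0" for m using qpoch_pp_ne0[OF p] Q_def by simp
  define T where "T = (\<Sum>k\<le>n. ec p k * (A * p) ^ k / Q (n - k))"
  have IH: "qpoch (A * p) p n / Q n = T" using Suc.IH[of "A * p"] by (simp add: Q_def T_def)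
  define u where "u k = ec p k * (1 - p ^ k) * A ^ k / Q (Suc n - k)" for k
  define v where "v k = ec p k * p ^ k * A ^ k * (1 - p ^ (Suc n - k)) / Q (Suc n - k)" for k
  have split: "(1 - p ^ Suc n) * (ec p k * A ^ k / Q (Suc n - k)) = u k + v k" if "k \<le> Suc n" for k
  proof -
    have "p ^ k * p ^ (Suc n - k) = p ^ Suc n" using that by (simp flip: power_add)
    then have "1 - p ^ Suc n = (1 - p ^ k) + p ^ k * (1 - p ^ (Suc n - k))"
      by (simp add: algebra_simps)
    then have e: "1 - p ^ Suc n = (1 - p ^ k) + p ^ k * (1 - p ^ (Suc n - k))" .
    have "u k + v k = (ec p k * (1 - p ^ k) * A ^ k + ec p k * p ^ k * A ^ k * (1 - p ^ (Suc n - k))) / Q (Suc n - k)"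
      unfolding u_def v_def by (rule add_divide_distrib[symmetric])
    also have "ec p k * (1 - p ^ k) * A ^ k + ec p k * p ^ k * A ^ k * (1 - p ^ (Suc n - k))
        = (1 - p ^ Suc n) * (ec p k * A ^ k)"
      by (subst e) (simp add: algebra_simps)
    finally show ?thesis by simp
  qed
  have sv: "(\<Sum>k\<le>Suc n. v k) = T"
  proof -
    have "(\<Sum>k\<le>Suc n. v k) = (\<Sum>k\<le>n. v k)" by (simp add: v_def)
    also have "\<dots> = T" unfolding T_def
    proof (rule sum.cong)
      fix k assume "k \<in> {..n}"
      then have k: "Suc n - k = Suc (n - k)" by auto
      have qq: "Q (Suc (n - k)) = Q (n - k) * (1 - p ^ Suc (n - k))"
        by (simp add: Q_def qpoch_pp_Suc)
      have ne: "1 - p ^ Suc (n - k) \<noteq> 0" by (rule pow_ne1[OF p])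
      have "v k = (ec p k * p ^ k * A ^ k) * (1 - p ^ Suc (n - k)) / (Q (n - k) * (1 - p ^ Suc (n - k)))"
        by (simp only: v_def k qq)
      also have "\<dots> = (ec p k * p ^ k * A ^ k) / Q (n - k)"
        by (rule mult_divide_mult_cancel_right[OF ne])
      also have "\<dots> = ec p k * (A * p) ^ k / Q (n - k)"
        by (simp add: power_mult_distrib mult_ac)
      finally show "v k = ec p k * (A * p) ^ k / Q (n - k)" .
    qed simp
    finally show ?thesis .
  qed
  have su: "(\<Sum>k\<le>Suc n. u k) = - A * T"
  proof -
    have "(\<Sum>k\<le>Suc n. u k) = u 0 + (\<Sum>i\<le>n. u (Suc i))" by (rule sum.atMost_Suc_shift)
    also have "\<dots> = (\<Sum>i\<le>n. - A * (ec p i * (A * p) ^ i / Q (n - i)))"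
    proof -
      have "u 0 = 0" by (simp add: u_def)
      moreover have "u (Suc i) = - A * (ec p i * (A * p) ^ i / Q (n - i))" for i
      proof -
        have "u (Suc i) = ec p (Suc i) * (1 - p ^ Suc i) * A ^ Suc i / Q (n - i)"
          by (simp add: u_def del: ec.simps)
        also have "\<dots> = - ec p i * p ^ i * A ^ Suc i / Q (n - i)"
          by (simp only: ec_rec[OF p])
        also have "\<dots> = - A * (ec p i * (A * p) ^ i / Q (n - i))"
          by (simp add: power_mult_distrib mult_ac)
        finally show ?thesis .
      qed
      ultimately show ?thesis by simp
    qed
    also have "\<dots> = - A * T" by (simp add: T_def sum_distrib_left)
    finally show ?thesis .
  qed
  have "(1 - p ^ Suc n) * (\<Sum>k\<le>Suc n. ec p k * A ^ k / Q (Suc n - k))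
        = (\<Sum>k\<le>Suc n. u k + v k)"
    unfolding sum_distrib_left using split by (intro sum.cong) auto
  also have "\<dots> = (1 - A) * T" by (simp only: sum.distrib su sv) (simp add: algebra_simps)
  finally have eq: "(1 - p ^ Suc n) * (\<Sum>k\<le>Suc n. ec p k * A ^ k / Q (Suc n - k)) = (1 - A) * T" .
  have "qpoch A p (Suc n) / qpoch p p (Suc n) = (1 - A) * T / (1 - p ^ Suc n)"
  proof -
    have e1: "qpoch A p (Suc n) = (1 - A) * qpoch (A * p) p n" by (rule qpoch_shift)
    have e2: "qpoch p p (Suc n) = Q n * (1 - p ^ Suc n)" by (simp only: Q_def qpoch_pp_Suc)
    have "qpoch A p (Suc n) / qpoch p p (Suc n) = (1 - A) * (qpoch (A * p) p n / Q n) / (1 - p ^ Suc n)"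
      unfolding e1 e2 using Qne[of n] pow_ne1[OF p, of n] by (simp add: field_simps)
    then show ?thesis by (simp only: IH)
  qed
  also have "\<dots> = (\<Sum>k\<le>Suc n. ec p k * A ^ k / Q (Suc n - k))"
    using eq pow_ne1[OF p, of n] by (simp add: field_simps)
  finally show ?case by (simp add: Q_def)
qed



lemma normq2: "norm (q::complex) < 1 \<Longrightarrow> norm (q^2) < 1"
  by (simp add: norm_power power_less_one_iff abs_square_less_1)

lemma L7:
  fixes q :: complex
  assumes q: "norm q < 1"
  shows "ec (q^2) j * (-q)^j = q^(j^2) / qpoch (q^2) (q^2) j"
proof (induction j)
  case 0 then show ?case by (simp add: qpoch_def)
next
  case (Suc j)
  define w where "w = (q^2)^j"
  have w': "w = q^(j*2)" by (simp add: w_def power_mult[symmetric] mult.commute)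
  have ne: "1 - (q^2)^Suc j \<noteq> 0" by (rule pow_ne1[OF normq2[OF q]])
  have "ec (q^2) (Suc j) * (-q)^Suc j = (ec (q^2) j * (-q)^j) * (q * w / (1 - (q^2)^Suc j))"
    by (simp add: w_def)
  also have "\<dots> = (q^(j^2) / qpoch (q^2) (q^2) j) * (q * w / (1 - (q^2)^Suc j))"
    by (simp only: Suc.IH)
  also have "\<dots> = q^(Suc j^2) / qpoch (q^2) (q^2) (Suc j)"
  proof -
    have sq: "Suc j ^ 2 = j^2 + (1 + j * 2)" by (simp add: power2_eq_square)
    have "q^(Suc j^2) = q^(j^2) * (q * w)"
      unfolding sq power_add w' by simp
    then show ?thesis by (simp add: qpoch_pp_Suc)
  qed
  finally show ?case .
qed

lemma L8:
  fixes q :: complex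
  assumes q: "norm q < 1"
  shows "ec (q^2) k * q^(k^2) / qpoch (-q) (q^2) k = ec (-q) (2*k)"
proof (induction k)
  case 0 then show ?case by (simp add: qpoch_def)
next
  case (Suc k)
  define w where "w = (q^2)^k"
  have w': "w = q^(k*2)" by (simp add: w_def power_mult[symmetric] mult.commute)
  define fac where "fac = (- w / (1 + q * w)) * (q * w / (1 - (q^2)^Suc k))"
  have sq: "Suc k ^ 2 = k^2 + (1 + k * 2)" by (simp add: power2_eq_square)
  have e1: "q^(Suc k^2) = q^(k^2) * (q * w)"
    unfolding sq power_add w' by simp
  have e2: "qpoch (-q) (q^2) (Suc k) = qpoch (-q) (q^2) k * (1 + q * w)"
    by (simp add: qpoch_Suc w_def)
  have "ec (q^2) (Suc k) * q^(Suc k^2) / qpoch (-q) (q^2) (Suc k)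
      = (ec (q^2) k * q^(k^2) / qpoch (-q) (q^2) k) * fac"
    unfolding e1 e2 fac_def by (simp add: w_def mult_ac)
  also have "\<dots> = ec (-q) (2*k) * fac" by (simp only: Suc.IH)
  also have "\<dots> = ec (-q) (2 * Suc k)"
  proof -
    have a: "(-q)^(2*k) = w" by (simp add: w_def power_mult)
    have b: "(-q)^Suc (2*k) = - q * w" by (simp add: w_def power_mult)
    have c0: "Suc (Suc (2*k)) = 2 * Suc k" by simp
    have c: "(-q)^Suc (Suc (2*k)) = (q^2)^Suc k" by (simp only: c0 power_mult) simp
    have "ec (-q) (2 * Suc k) = ec (-q) (Suc (Suc (2*k)))" by simp
    also have "\<dots> = ec (-q) (2*k) * (- ((-q)^(2*k)) / (1 - (-q)^Suc (2*k)))
                       * (- ((-q)^Suc (2*k)) / (1 - (-q)^Suc (Suc (2*k))))"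
      by (simp only: ec.simps) (simp add: field_simps)
    also have "\<dots> = ec (-q) (2*k) * fac"
      unfolding a b c fac_def by (simp add: mult_ac)
    finally show ?thesis by simp
  qed
  finally show ?case .
qed



lemma infsum_nat:
  fixes f :: "nat \<Rightarrow> complex"
  assumes "f summable_on UNIV"
  shows "infsum f UNIV = suminf f"
  using has_sum_imp_sums[OF has_sum_infsum[OF assms]] sums_unique by metis

lemma ec_summable_on: "norm p < 1 \<Longrightarrow> (\<lambda>k. ec p k * x ^ k) summable_on UNIV"
  by (rule norm_summable_imp_summable_on[OF ec_summable])

lemma L9:
  assumes p: "norm p < 1"
  shows "(\<lambda>m. ec p (2*m) * (s^2)^m) sums ((g p (-s) + g p s) / 2)"
proof -
  define f where "f k = ec p k * (s^k + (-s)^k) / 2" for k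
  have "(\<lambda>k. (ec p k * s^k + ec p k * (-s)^k) / 2) sums ((g p s + g p (-s)) / 2)"
    unfolding g_def by (intro sums_divide sums_add summable_sums ec_summable'[OF p])
  then have fs: "f sums ((g p (-s) + g p s) / 2)"
    unfolding f_def by (simp add: algebra_simps)
  have "(\<lambda>m. f (2*m)) sums ((g p (-s) + g p s) / 2)"
  proof (subst sums_mono_reindex)
    show "strict_mono (\<lambda>m::nat. 2*m)" by (rule strict_monoI) simp
    show "f n = 0" if "n \<notin> range (\<lambda>m::nat. 2*m)" for n
    proof -
      have "odd n" using that by (metis evenE rangeI)
      then show ?thesis by (simp add: f_def)
    qed
  qed (rule fs)
  moreover have "f (2*m) = ec p (2*m) * (s^2)^m" for m
    by (simp add: f_def power_mult)
  ultimately show ?thesis by simp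
qed

lemma qpoch_ne0:
  fixes x p :: complex
  assumes "norm x < 1" "norm p \<le> 1"
  shows "qpoch x p k \<noteq> 0"
proof -
  have "1 - x * p ^ j \<noteq> 0" for j
  proof -
    have "norm (x * p ^ j) = norm x * norm p ^ j" by (simp add: norm_mult norm_power)
    also have "\<dots> \<le> norm x * 1" using assms by (intro mult_left_mono power_le_one) auto
    finally have "norm (x * p ^ j) < 1" using assms by simp
    then show "1 - x * p ^ j \<noteq> 0" by (metis norm_one order_less_irrefl right_minus_eq)
  qed
  then show ?thesis unfolding qpoch_def by simp
qed



theorem lemma3p2:
  fixes A q s :: complex
  assumes "norm q < 1"
    and "s ^ 2 = A"
  shows "F A q = (1/2) * qpoch_inf (- q) (q^2)
           * (qpoch_inf (- s) (- q) + qpoch_inf s (- q))"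
proof -
  note q = assms(1)
  define p2 where "p2 = q^2"
  have p2: "norm p2 < 1" unfolding p2_def by (rule normq2[OF q])
  have mq: "norm (-q) < 1" using q by simp
  define Q where "Q j = qpoch p2 p2 j" for j
  define a where "a k = ec p2 k * A ^ k" for k
  define b where "b j = ec p2 j * (-q) ^ j" for j
  define h where "h x = a (fst x) * q ^ ((fst x)^2 + 2 * fst x * snd x) * b (snd x)" for x :: "nat \<times> nat"
  define Pinf where "Pinf = qpoch_inf (-q) p2"

  have sna: "summable (\<lambda>k. norm (a k))" unfolding a_def by (rule ec_summable[OF p2])
  have snb: "summable (\<lambda>j. norm (b j))" unfolding b_def by (rule ec_summable[OF p2])
  have na_on: "(\<lambda>k. norm (a k)) summable_on UNIV"
    using norm_summable_imp_summable_on[of "\<lambda>k. norm (a k)"] sna by simp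
  have nb_on: "(\<lambda>j. norm (b j)) summable_on UNIV"
    using norm_summable_imp_summable_on[of "\<lambda>j. norm (b j)"] snb by simp
  define G where "G x = norm (a (fst x)) * norm (b (snd x))" for x :: "nat \<times> nat"
  have G_abs: "(\<lambda>x. norm (G x)) summable_on (Sigma UNIV (\<lambda>_. UNIV))"
  proof (rule iffD2[OF Infinite_Sum.abs_summable_on_Sigma_iff], intro conjI ballI)
    fix k :: nat
    show "(\<lambda>j. norm (G (k, j))) summable_on UNIV"
      unfolding G_def using summable_on_cmult_right[OF nb_on, of "norm (a k)"]
      by (simp add: abs_mult)
  next
    have "(\<lambda>k. norm (a k) * infsum (\<lambda>j. norm (b j)) UNIV) summable_on UNIV"
      by (rule summable_on_cmult_left[OF na_on])
    moreover have "infsum (\<lambda>j. norm (G (k, j))) UNIV = norm (a k) * infsum (\<lambda>j. norm (b j)) UNIV" for k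
      unfolding G_def by (simp add: abs_mult infsum_cmult_right nb_on)
    moreover have "norm (a k) * infsum (\<lambda>j. norm (b j)) UNIV \<ge> 0" for k
      by (intro mult_nonneg_nonneg infsum_nonneg) auto
    ultimately show "(\<lambda>k. norm (infsum (\<lambda>j. norm (G (k, j))) UNIV)) summable_on UNIV"
      by simp
  qed
  have h_abs: "(\<lambda>x. norm (h x)) summable_on UNIV"
  proof (rule Infinite_Sum.abs_summable_on_comparison_test)
    show "(\<lambda>x. norm (G x)) summable_on UNIV" using G_abs by simp
    fix x :: "nat \<times> nat"
    have "norm (q ^ ((fst x)^2 + 2 * fst x * snd x)) \<le> 1"
      using q by (simp add: norm_power power_le_one)
    then have "norm (h x) \<le> norm (a (fst x)) * 1 * norm (b (snd x))"
      unfolding h_def norm_mult by (intro mult_mono mult_left_mono) auto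
    then show "norm (h x) \<le> norm (G x)" by (simp add: G_def)
  qed
  have h_sum: "h summable_on UNIV" by (rule abs_summable_summable[OF h_abs])

  have diag: "q ^ (n^2) * qpoch A p2 n / Q n = (\<Sum>k\<le>n. h (k, n - k))" for n
  proof -
    have "q ^ (n^2) * qpoch A p2 n / Q n = q ^ (n^2) * (qpoch A p2 n / Q n)" by simp
    also have "\<dots> = q ^ (n^2) * (\<Sum>k\<le>n. ec p2 k * A ^ k / Q (n - k))"
      unfolding Q_def by (simp only: qbin[OF p2])
    also have "\<dots> = (\<Sum>k\<le>n. h (k, n - k))" unfolding sum_distrib_left
    proof (rule sum.cong)
      fix k assume "k \<in> {..n}"
      then obtain j where nj: "n = k + j" by (auto dest: le_Suc_ex)
      have bj: "b j = q ^ (j^2) / Q j" unfolding b_def Q_def p2_def by (rule L7[OF q])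
      have ex: "(k + j)^2 = (k^2 + 2 * k * j) + j^2" by (simp add: power2_eq_square algebra_simps)
      show "q ^ (n^2) * (ec p2 k * A ^ k / Q (n - k)) = h (k, n - k)"
        unfolding h_def a_def using bj by (simp add: nj ex power_add mult_ac)
    qed simp
    finally show ?thesis .
  qed

  define \<phi> where "\<phi> x = (snd x, fst x - snd x)" for x :: "nat \<times> nat"
  define S where "S = Sigma (UNIV :: nat set) (\<lambda>n. {..n})"
  have bij: "bij_betw \<phi> S UNIV"
  proof (rule bij_betw_byWitness[where f' = "\<lambda>y. (fst y + snd y, fst y)"])
    show "\<forall>x\<in>S. (fst (\<phi> x) + snd (\<phi> x), fst (\<phi> x)) = x" by (auto simp: S_def \<phi>_def)
    show "\<forall>y\<in>UNIV. \<phi> (fst y + snd y, fst y) = y" by (auto simp: \<phi>_def)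
    show "\<phi> ` S \<subseteq> UNIV" by simp
    show "(\<lambda>y. (fst y + snd y, fst y)) ` UNIV \<subseteq> S" by (auto simp: S_def)
  qed
  have hphi_sum: "(\<lambda>x. h (\<phi> x)) summable_on S"
    using summable_on_reindex_bij_betw[OF bij, of h] h_sum by simp
  have "infsum h UNIV = infsum (\<lambda>x. h (\<phi> x)) S"
    using infsum_reindex_bij_betw[OF bij, of h] by simp
  also have "\<dots> = infsum (\<lambda>n. infsum (\<lambda>k. h (\<phi> (n, k))) {..n}) UNIV"
    using infsum_Sigma_banach[of "\<lambda>x. h (\<phi> x)" UNIV "\<lambda>n. {..n}"] hphi_sum by (simp add: S_def)
  also have "\<dots> = infsum (\<lambda>n. \<Sum>k\<le>n. h (k, n - k)) UNIV"
    by (simp add: \<phi>_def)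
  also have "\<dots> = (\<Sum>n. \<Sum>k\<le>n. h (k, n - k))"
  proof (rule infsum_nat)
    have "(\<lambda>n. infsum (\<lambda>k. h (\<phi> (n, k))) {..n}) summable_on UNIV"
    proof -
      have e: "(\<lambda>(n, k). h (\<phi> (n, k))) = (\<lambda>x. h (\<phi> x))" by auto
      show ?thesis
        using summable_on_Sigma_banach[of "\<lambda>n k. h (\<phi> (n, k))" UNIV "\<lambda>n. {..n}"] hphi_sum
        unfolding e by (simp add: S_def)
    qed
    then show "(\<lambda>n. \<Sum>k\<le>n. h (k, n - k)) summable_on UNIV" by (simp add: \<phi>_def)
  qed
  also have "\<dots> = F A q"
    unfolding F_def using diag by (simp add: Q_def p2_def)
  finally have FH: "F A q = infsum h UNIV" by simp

  have row: "infsum (\<lambda>j. h (k, j)) UNIV = Pinf * (ec (-q) (2*k) * A ^ k)" for k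
  proof -
    define x where "x = p2 ^ k * (-q)"
    have "h (k, j) = (a k * q ^ (k^2)) * (ec p2 j * x ^ j)" for j
    proof -
      have e1: "q ^ (2 * k * j) = (p2 ^ k) ^ j" by (simp add: p2_def power_mult)
      have hx: "x ^ j = (-q)^j * (p2^k)^j"
        unfolding x_def power_mult_distrib by (rule mult.commute)
      have "h (k, j) = a k * q ^ (k^2) * q ^ (2 * k * j) * (ec p2 j * (-q) ^ j)"
        unfolding h_def b_def by (simp add: power_add)
      also have "\<dots> = (a k * q ^ (k^2)) * (ec p2 j * x ^ j)"
        unfolding e1 hx by (simp only: mult_ac)
      finally show ?thesis .
    qed
    then have "infsum (\<lambda>j. h (k, j)) UNIV = (a k * q ^ (k^2)) * infsum (\<lambda>j. ec p2 j * x ^ j) UNIV"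
      by (simp add: infsum_cmult_right ec_summable_on[OF p2])
    also have "infsum (\<lambda>j. ec p2 j * x ^ j) UNIV = g p2 x"
      unfolding g_def by (rule infsum_nat[OF ec_summable_on[OF p2]])
    also have "g p2 x = Pinf / qpoch (-q) p2 k"
    proof -
      have ne: "qpoch (-q) p2 k \<noteq> 0" using qpoch_ne0[of "-q" p2 k] q p2 by simp
      have "g p2 (-q) = qpoch (-q) p2 k * g p2 x" unfolding x_def by (rule g_iter[OF p2])
      moreover have "g p2 (-q) = Pinf" unfolding Pinf_def by (rule g_eq[OF p2])
      ultimately show ?thesis using ne by (simp add: field_simps)
    qed
    also have "a k * q ^ (k^2) * (Pinf / qpoch (-q) p2 k) = Pinf * (ec p2 k * q ^ (k^2) / qpoch (-q) p2 k * A ^ k)"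
      by (simp add: a_def mult_ac)
    also have "ec p2 k * q ^ (k^2) / qpoch (-q) p2 k = ec (-q) (2*k)"
      unfolding p2_def by (rule L8[OF q])
    finally show ?thesis .
  qed
  have "infsum h UNIV = infsum (\<lambda>k. infsum (\<lambda>j. h (k, j)) UNIV) UNIV"
    using infsum_Sigma_banach[of h UNIV "\<lambda>_. UNIV"] h_sum by simp
  also have "\<dots> = infsum (\<lambda>k. Pinf * (ec (-q) (2*k) * A ^ k)) UNIV"
    by (simp add: row)
  also have "\<dots> = (\<Sum>k. Pinf * (ec (-q) (2*k) * A ^ k))"
  proof (rule infsum_nat)
    have "(\<lambda>k. infsum (\<lambda>j. h (k, j)) UNIV) summable_on UNIV"
      using summable_on_Sigma_banach[of "\<lambda>k j. h (k, j)" UNIV "\<lambda>_. UNIV"] h_sum by simp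
    then show "(\<lambda>k. Pinf * (ec (-q) (2*k) * A ^ k)) summable_on UNIV" by (simp add: row)
  qed
  also have "\<dots> = Pinf * ((g (-q) (-s) + g (-q) s) / 2)"
  proof (rule sums_unique[symmetric], rule sums_mult)
    show "(\<lambda>k. ec (-q) (2*k) * A ^ k) sums ((g (-q) (-s) + g (-q) s) / 2)"
      using L9[OF mq, of s] assms(2) by simp
  qed
  finally have "F A q = Pinf * ((g (-q) (-s) + g (-q) s) / 2)" using FH by simp
  then show ?thesis
    unfolding Pinf_def p2_def g_eq[OF mq] by simp
qed

end
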